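(* The set of spacelike pairs $\{(x,y)\in\mathrm{dS}^d\times\mathrm{dS}^d:\beta(x-y,x-y)<0\}$ coincides with $$\mathrm{SO}_{1,d}(\mathbb R).(W^+\times(-W^+))=\bigcup_{W\in\mathcal W}W\times(-W).$$ For $d>1$ it also coincides with $\mathrm{SO}_{1,d}(\mathbb R)_e.(W^+\times(-W^+))$.
   Context: Let $d\ge1$, $\beta(x,y)=x_0y_0-x_1y_1-\dots-x_dy_d$ on $\mathbb R^{1+d}$, $\mathrm{dS}^d=\{x\in\mathbb R^{1+d}:\beta(x,x)=-1\}$ (de Sitter space). $\mathrm{SO}_{1,d}(\mathbb R)$ (determinant one, preserving $\beta$) acts diagonally on pairs. The canonical wedge is $W^+=\{x\in\mathrm{dS}^d:x_1>|x_0|\}$, and a wedge region is a set $W=g.W^+$ with $g\in\mathrm{SO}_{1,d}(\mathbb R)$; $\mathcal W$ is the set of wedge regions. *)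

theory Defs
  imports "HOL-Analysis.Analysis"
begin

text \<open>Minkowski space R^{1+d} is modelled as real^'n with CARD('n) = 1 + d.
  The index i0 plays the role of the time coordinate x_0, and i1 (distinct from i0)
  the role of the coordinate x_1.\<close>

definition beta :: "'n::finite \<Rightarrow> real^'n \<Rightarrow> real^'n \<Rightarrow> real" where
  "beta i0 x y = x$i0 * y$i0 - (\<Sum>i\<in>UNIV - {i0}. x$i * y$i)"

definition deSitter :: "'n::finite \<Rightarrow> (real^'n) set" where
  "deSitter i0 = {x. beta i0 x x = -1}"

definition SO1d :: "'n::finite \<Rightarrow> (real^'n^'n) set" where
  "SO1d i0 = {g. det g = 1 \<and> (\<forall>x y. beta i0 (g *v x) (g *v y) = beta i0 x y)}"

definition SO1d_e :: "'n::finite \<Rightarrow> (real^'n^'n) set" where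
  "SO1d_e i0 = connected_component_set (SO1d i0) (mat 1)"

definition Wplus :: "'n::finite \<Rightarrow> 'n \<Rightarrow> (real^'n) set" where
  "Wplus i0 i1 = {x \<in> deSitter i0. x$i1 > \<bar>x$i0\<bar>}"

definition wedges :: "'n::finite \<Rightarrow> 'n \<Rightarrow> (real^'n) set set" where
  "wedges i0 i1 = (\<lambda>g. (\<lambda>x. g *v x) ` Wplus i0 i1) ` SO1d i0"

definition spacelike_pairs :: "'n::finite \<Rightarrow> ((real^'n) \<times> (real^'n)) set" where
  "spacelike_pairs i0 = {(x, y). x \<in> deSitter i0 \<and> y \<in> deSitter i0 \<and> beta i0 (x - y) (x - y) < 0}"

definition orbit_pairs :: "(real^'n::finite^'n) set \<Rightarrow> (real^'n) set \<Rightarrow> ((real^'n) \<times> (real^'n)) set" where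
  "orbit_pairs G W = {(g *v x, g *v y) | g x y. g \<in> G \<and> x \<in> W \<and> y \<in> uminus ` W}"

end

theory Submission
  imports Defs
begin


definition eta :: "'n::finite \<Rightarrow> 'n \<Rightarrow> real" where
  "eta i0 i = (if i = i0 then 1 else -1)"

definition Jv :: "'n::finite \<Rightarrow> real^'n \<Rightarrow> real^'n" where
  "Jv i0 y = (\<chi> i. eta i0 i * y$i)"

lemma beta_sum: "beta i0 x y = (\<Sum>i\<in>UNIV. eta i0 i * x$i * y$i)"
proof -
  have "(\<Sum>i\<in>UNIV. eta i0 i * x$i * y$i) = eta i0 i0 * x$i0 * y$i0 + (\<Sum>i\<in>UNIV-{i0}. eta i0 i * x$i * y$i)"
    by (simp add: sum.remove)
  also have "(\<Sum>i\<in>UNIV-{i0}. eta i0 i * x$i * y$i) = - (\<Sum>i\<in>UNIV-{i0}. x$i * y$i)"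
    by (simp add: eta_def sum_negf[symmetric])
  finally show ?thesis by (simp add: beta_def eta_def)
qed

lemma beta_inner: "beta i0 x y = x \<bullet> Jv i0 y"
  by (simp add: beta_sum inner_vec_def Jv_def mult_ac)

lemma Jv_add[simp]: "Jv i0 (a + b) = Jv i0 a + Jv i0 b"
  by (simp add: Jv_def vec_eq_iff algebra_simps)
lemma Jv_diff[simp]: "Jv i0 (a - b) = Jv i0 a - Jv i0 b"
  by (simp add: Jv_def vec_eq_iff algebra_simps)
lemma Jv_scaleR[simp]: "Jv i0 (r *\<^sub>R a) = r *\<^sub>R Jv i0 a"
  by (simp add: Jv_def vec_eq_iff algebra_simps)
lemma Jv_neg[simp]: "Jv i0 (- a) = - Jv i0 a"
  by (simp add: Jv_def vec_eq_iff algebra_simps)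
lemma Jv_zero[simp]: "Jv i0 0 = 0"
  by (simp add: Jv_def vec_eq_iff algebra_simps)

lemma beta_sym: "beta i0 x y = beta i0 y x"
  by (simp add: beta_def mult.commute)

lemma beta_add_left[simp]: "beta i0 (a + b) c = beta i0 a c + beta i0 b c"
  by (simp add: beta_inner inner_add_left)
lemma beta_add_right[simp]: "beta i0 c (a + b) = beta i0 c a + beta i0 c b"
  by (simp add: beta_inner inner_add_right)
lemma beta_diff_left[simp]: "beta i0 (a - b) c = beta i0 a c - beta i0 b c"
  by (simp add: beta_inner inner_diff_left)
lemma beta_diff_right[simp]: "beta i0 c (a - b) = beta i0 c a - beta i0 c b"
  by (simp add: beta_inner inner_diff_right)
lemma beta_scaleR_left[simp]: "beta i0 (r *\<^sub>R a) c = r * beta i0 a c"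
  by (simp add: beta_inner)
lemma beta_scaleR_right[simp]: "beta i0 c (r *\<^sub>R a) = r * beta i0 c a"
  by (simp add: beta_inner)
lemma beta_neg_left[simp]: "beta i0 (- a) c = - beta i0 a c"
  by (simp add: beta_inner)
lemma beta_neg_right[simp]: "beta i0 c (- a) = - beta i0 c a"
  by (simp add: beta_inner)
lemma beta_zero_left[simp]: "beta i0 0 c = 0"
  by (simp add: beta_inner)
lemma beta_zero_right[simp]: "beta i0 c 0 = 0"
  by (simp add: beta_inner)

lemma beta_axis_left[simp]: "beta i0 (axis j 1) v = eta i0 j * v$j"
proof -
  have "\<And>i. eta i0 i * axis j 1 $ i * v $ i = (if i = j then eta i0 j * v$j else 0)" by (auto simp: axis_def)
  then show ?thesis by (simp add: beta_sum)
qed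
lemma beta_axis_right[simp]: "beta i0 v (axis j 1) = eta i0 j * v$j"
  by (subst beta_sym) simp

lemma eta_i0[simp]: "eta i0 i0 = 1" and eta_ne[simp]: "j \<noteq> i0 \<Longrightarrow> eta i0 j = -1"
  by (auto simp: eta_def)

definition reflv :: "'n::finite \<Rightarrow> real^'n \<Rightarrow> real^'n \<Rightarrow> real^'n" where
  "reflv i0 w x = x - (2 * beta i0 x w / beta i0 w w) *\<^sub>R w"

definition reflm :: "'n::finite \<Rightarrow> real^'n \<Rightarrow> real^'n^'n" where
  "reflm i0 w = (\<chi> i j. (if i = j then 1 else 0) - 2 / beta i0 w w * (w$i * eta i0 j * w$j))"

lemma reflm_mult: "reflm i0 w *v x = reflv i0 w x"
proof -
  have "(\<Sum>j\<in>UNIV. ((if i = j then 1 else 0) - 2 / beta i0 w w * (w$i * eta i0 j * w$j)) * x$j)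
      = x$i - 2 / beta i0 w w * w$i * (\<Sum>j\<in>UNIV. eta i0 j * x$j * w$j)" for i
  proof -
    have "(\<Sum>j\<in>UNIV. ((if i = j then 1 else 0) - 2 / beta i0 w w * (w$i * eta i0 j * w$j)) * x$j)
      = (\<Sum>j\<in>UNIV. (if i = j then x$j else 0)) - (\<Sum>j\<in>UNIV. 2 / beta i0 w w * w$i * (eta i0 j * x$j * w$j))"
      by (subst sum_subtractf[symmetric]) (rule sum.cong, auto simp: algebra_simps)
    also have "\<dots> = x$i - 2 / beta i0 w w * w$i * (\<Sum>j\<in>UNIV. eta i0 j * x$j * w$j)"
      by (simp add: sum_distrib_left)
    finally show ?thesis .
  qed
  then show ?thesis
    by (simp add: vec_eq_iff matrix_vector_mult_def reflm_def reflv_def beta_sum[of i0 x w] algebra_simps)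
qed

lemma reflv_pres:
  assumes "beta i0 w w \<noteq> 0"
  shows "beta i0 (reflv i0 w x) (reflv i0 w y) = beta i0 x y"
proof -
  define B where "B = beta i0 w w"
  define a where "a = 2 * beta i0 x w / B"
  define b where "b = 2 * beta i0 y w / B"
  have B: "B \<noteq> 0" using assms B_def by simp
  have "beta i0 (reflv i0 w x) (reflv i0 w y) = beta i0 x y - b * beta i0 x w - a * beta i0 y w + a * b * B"
    by (simp add: reflv_def a_def b_def B_def beta_sym[of i0 w y] algebra_simps)
  also have "\<dots> = beta i0 x y" using B by (simp add: a_def b_def field_simps)
  finally show ?thesis .
qed

lemma reflv_invol:
  assumes "beta i0 w w \<noteq> 0"
  shows "reflv i0 w (reflv i0 w x) = x"
proof -
  define B where "B = beta i0 w w"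
  define a where "a = 2 * beta i0 x w / B"
  have B: "B \<noteq> 0" using assms B_def by simp
  have 1: "reflv i0 w x = x - a *\<^sub>R w" by (simp add: reflv_def a_def B_def)
  have "beta i0 (x - a *\<^sub>R w) w = - beta i0 x w" using B by (simp add: a_def B_def[symmetric] field_simps)
  then show ?thesis using B by (simp add: 1 reflv_def B_def[symmetric] a_def field_simps)
qed

lemma reflv_orth: "beta i0 x w = 0 \<Longrightarrow> reflv i0 w x = x"
  by (simp add: reflv_def)

lemma reflv_self: "beta i0 w w \<noteq> 0 \<Longrightarrow> reflv i0 w w = - w"
  by (simp add: reflv_def) (simp add: scaleR_2 algebra_simps)

lemma reflm_neg: "reflm i0 (- w) = reflm i0 w"
  by (simp add: reflm_def)



definition pres :: "'n::finite \<Rightarrow> real^'n^'n \<Rightarrow> bool" where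
  "pres i0 g = (\<forall>x y. beta i0 (g *v x) (g *v y) = beta i0 x y)"

definition Jm :: "'n::finite \<Rightarrow> real^'n^'n" where
  "Jm i0 = (\<chi> i j. if i = j then eta i0 i else 0)"

lemma Jm_mult: "Jm i0 *v y = Jv i0 y"
proof -
  have "\<And>i j. (if i = j then eta i0 i else 0) * y $ j = (if i = j then eta i0 i * y$i else 0)" by auto
  then show ?thesis by (simp add: vec_eq_iff matrix_vector_mult_def Jm_def Jv_def)
qed

lemma det_Jm: "det (Jm i0) \<noteq> 0"
proof -
  have "det (Jm i0) = prod (\<lambda>i. Jm i0 $i$i) UNIV"
    by (rule det_diagonal) (simp add: Jm_def)
  also have "\<dots> \<noteq> 0" by (simp add: Jm_def eta_def)
  finally show ?thesis .
qed

lemma pres_det_sq: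
  assumes "pres i0 g"
  shows "det g * det g = 1"
proof -
  define K where "K = transpose g ** Jm i0 ** g"
  have inner: "x \<bullet> (K *v y) = x \<bullet> (Jm i0 *v y)" for x y
  proof -
    have "K *v y = transpose g *v (Jm i0 *v (g *v y))"
      by (simp add: K_def matrix_vector_mul_assoc matrix_mul_assoc)
    then have "x \<bullet> (K *v y) = (g *v x) \<bullet> (Jm i0 *v (g *v y))"
      by (simp add: inner_commute[of x] dot_lmul_matrix) (simp add: inner_commute)
    also have "\<dots> = beta i0 (g *v x) (g *v y)" by (simp add: beta_inner Jm_mult)
    also have "\<dots> = beta i0 x y" using assms by (simp add: pres_def)
    finally show ?thesis by (simp add: beta_inner Jm_mult)
  qed
  have "K *v y = Jm i0 *v y" for y
  proof -
    have "(K *v y - Jm i0 *v y) \<bullet> (K *v y - Jm i0 *v y) = 0"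
      using inner[of "K *v y - Jm i0 *v y" y] by (simp only: inner_diff_right)
    then show ?thesis by simp
  qed
  then have "K = Jm i0" by (simp add: matrix_eq)
  then have "det (transpose g ** Jm i0 ** g) = det (Jm i0)" by (simp add: K_def)
  then have "det g * det (Jm i0) * det g = det (Jm i0)"
    by (simp only: det_mul det_transpose)
  then show ?thesis using det_Jm[of i0]
    by (metis mult.commute mult.left_commute mult_cancel_left1)
qed

lemma pres_mult: "pres i0 g \<Longrightarrow> pres i0 h \<Longrightarrow> pres i0 (g ** h)"
  by (simp add: pres_def matrix_vector_mul_assoc[symmetric])

lemma pres_reflm: "beta i0 w w \<noteq> 0 \<Longrightarrow> pres i0 (reflm i0 w)"
  by (simp add: pres_def reflm_mult reflv_pres)

lemma pres_id: "pres i0 (mat 1)"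
  by (simp add: pres_def)

lemma reflm_invol: "beta i0 w w \<noteq> 0 \<Longrightarrow> reflm i0 w ** reflm i0 w = mat 1"
  by (simp add: matrix_eq matrix_vector_mul_assoc[symmetric] reflm_mult reflv_invol)

lemma SO1d_mult: "g \<in> SO1d i0 \<Longrightarrow> h \<in> SO1d i0 \<Longrightarrow> g ** h \<in> SO1d i0"
  using pres_mult[of i0 g h] by (simp add: SO1d_def pres_def det_mul)

lemma SO1d_iff: "g \<in> SO1d i0 \<longleftrightarrow> det g = 1 \<and> pres i0 g"
  by (simp add: SO1d_def pres_def)

lemma id_SO1d: "mat 1 \<in> SO1d i0"
  by (simp add: SO1d_def)

lemma continuous_on_det:
  fixes f :: "'a::topological_space \<Rightarrow> real^'n::finite^'n"
  assumes "continuous_on S f"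
  shows "continuous_on S (\<lambda>t. det (f t))"
  unfolding det_def by (intro continuous_intros assms)

lemma continuous_on_mmult_left:
  "continuous_on S (\<lambda>k::real^'n::finite^'n. g ** k)"
  unfolding matrix_matrix_mult_def by (intro continuous_intros)

lemma SO1d_e_mult:
  assumes "g \<in> SO1d_e i0" "h \<in> SO1d_e i0"
  shows "g ** h \<in> SO1d_e i0"
proof -
  let ?C = "SO1d_e i0"
  have CS: "?C \<subseteq> SO1d i0" by (simp add: SO1d_e_def connected_component_subset)
  have conC: "connected ?C" by (simp add: SO1d_e_def)
  have gS: "g \<in> SO1d i0" using assms CS by auto
  let ?D = "(\<lambda>k. g ** k) ` ?C"
  have conD: "connected ?D"
    by (rule connected_continuous_image[OF continuous_on_mmult_left conC])
  have "mat 1 \<in> ?C" using id_SO1d by (simp add: SO1d_e_def)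
  then have gD: "g \<in> ?D" by (metis image_eqI matrix_mul_rid)
  have "connected (?C \<union> ?D)"
    using connected_Un[OF conC conD] gD assms(1) by blast
  moreover have "?C \<union> ?D \<subseteq> SO1d i0" using CS gS SO1d_mult by blast
  moreover have "mat 1 \<in> ?C \<union> ?D" using \<open>mat 1 \<in> ?C\<close> by simp
  ultimately have "?C \<union> ?D \<subseteq> ?C"
    unfolding SO1d_e_def by (rule connected_component_maximal[rotated])
  then show ?thesis using assms(2) by blast
qed



lemma continuous_on_beta[continuous_intros]:
  "continuous_on S f \<Longrightarrow> continuous_on S g \<Longrightarrow> continuous_on S (\<lambda>t. beta i0 (f t) (g t))"
  unfolding beta_def by (intro continuous_intros)

lemma refl_pair_SOe:
  assumes "beta i0 u u * beta i0 v v > 0"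
  shows "reflm i0 u ** reflm i0 v \<in> SO1d_e i0"
proof -
  define u' where "u' = (if beta i0 u v * beta i0 v v \<ge> 0 then u else -u)"
  have ru: "reflm i0 u' = reflm i0 u" by (simp add: u'_def reflm_neg)
  have Bu: "beta i0 u' u' = beta i0 u u" by (simp add: u'_def)
  have Buv: "beta i0 u' v * beta i0 v v \<ge> 0" by (simp add: u'_def)
  define Bv where "Bv = beta i0 v v"
  have Bvnz: "Bv \<noteq> 0" using assms Bv_def by auto
  define w where "w t = (1 - t) *\<^sub>R v + t *\<^sub>R u'" for t :: real
  have nz: "beta i0 (w t) (w t) * Bv > 0" if "t \<in> {0..1}" for t
  proof -
    have e: "beta i0 (w t) (w t) * Bv = (1-t)^2 * Bv^2 + 2*t*(1-t) * (beta i0 u' v * Bv) + t^2 * (beta i0 u' u' * Bv)"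
      by (simp add: w_def Bv_def beta_sym[of i0 v u'] algebra_simps power2_eq_square)
    have a: "(1-t)^2 * Bv^2 \<ge> 0" by simp
    have b: "2*t*(1-t) * (beta i0 u' v * Bv) \<ge> 0" using that Buv Bv_def by simp
    have c: "t^2 * (beta i0 u' u' * Bv) \<ge> 0" using assms Bu Bv_def by simp
    show ?thesis
    proof (cases "t = 0")
      case True then show ?thesis using e Bvnz by simp
    next
      case False
      then have "t^2 * (beta i0 u' u' * Bv) > 0" using assms Bu Bv_def by simp
      then show ?thesis using e a b by linarith
    qed
  qed
  then have nz': "beta i0 (w t) (w t) \<noteq> 0" if "t \<in> {0..1}" for t using that by fastforce
  define P where "P t = reflm i0 (w t) ** reflm i0 v" for t
  have contw: "continuous_on {0..1} w" unfolding w_def by (intro continuous_intros)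
  have contP: "continuous_on {0..1} P"
    unfolding P_def reflm_def matrix_matrix_mult_def
    by (intro continuous_intros contw) (use nz' in auto)
  have presP: "pres i0 (P t)" if "t \<in> {0..1}" for t
    unfolding P_def using nz'[OF that] Bvnz Bv_def by (intro pres_mult pres_reflm) auto
  have sq: "det (P t) * det (P t) = 1" if "t \<in> {0..1}" for t
    using pres_det_sq[OF presP[OF that]] .
  have P0: "P 0 = mat 1" using reflm_invol[of i0 v] Bvnz by (simp add: P_def w_def Bv_def)
  have det1: "det (P t) = 1" if t: "t \<in> {0..1}" for t
  proof (rule ccontr)
    assume "det (P t) \<noteq> 1"
    then have "det (P t) = -1" using sq[OF t]
      by (metis mult_cancel_left1 mult_minus1 square_eq_1_iff)
    have cd: "continuous_on {0..t} (\<lambda>s. det (P s))"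
      by (rule continuous_on_det, rule continuous_on_subset[OF contP]) (use t in auto)
    obtain s where s: "0 \<le> s" "s \<le> t" "det (P s) = 0"
      using IVT2'[of "\<lambda>s. det (P s)" t 0 0, OF _ _ _ cd] \<open>det (P t) = -1\<close> P0 t by auto
    then show False using sq[of s] t by auto
  qed
  let ?T = "P ` {0..1}"
  have "connected ?T" by (rule connected_continuous_image[OF contP]) simp
  moreover have "?T \<subseteq> SO1d i0" using det1 presP by (auto simp: SO1d_iff)
  moreover have "mat 1 \<in> ?T" using P0 by (metis atLeastAtMost_iff image_eqI order_refl zero_le_one)
  ultimately have "?T \<subseteq> SO1d_e i0"
    unfolding SO1d_e_def by (rule connected_component_maximal[rotated])
  moreover have "P 1 = reflm i0 u ** reflm i0 v" by (simp add: P_def w_def ru)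
  moreover have "P 1 \<in> ?T" by simp
  ultimately show ?thesis by auto
qed

lemma SOe_sub: "SO1d_e i0 \<subseteq> SO1d i0"
  by (simp add: SO1d_e_def connected_component_subset)

lemma axis_comp: "axis j (1::real) $ i = (if i = j then 1 else 0)"
  by (simp add: axis_def)

lemma det_reflm_axis: "det (reflm i0 (axis j 1)) = -1"
proof -
  have B: "beta i0 (axis j 1) (axis j 1) = eta i0 j" by simp
  have en: "eta i0 j \<noteq> 0" by (simp add: eta_def)
  have "det (reflm i0 (axis j 1)) = prod (\<lambda>i. reflm i0 (axis j 1) $i$i) UNIV"
    by (rule det_diagonal) (auto simp: reflm_def axis_comp)
  also have "\<dots> = prod (\<lambda>i. if i = j then -1 else 1) UNIV"
    using en by (intro prod.cong) (auto simp: reflm_def axis_comp)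
  also have "\<dots> = -1"
    by (simp add: prod.remove[of UNIV j])
  finally show ?thesis .
qed

lemma det_reflm:
  assumes "beta i0 w w \<noteq> 0" "i1 \<noteq> i0"
  shows "det (reflm i0 w) = -1"
proof -
  define a :: "real^'a" where "a = (if beta i0 w w > 0 then axis i0 1 else axis i1 1)"
  have "beta i0 w w * beta i0 a a > 0"
    using assms by (auto simp: a_def mult_neg_neg)
  then have "reflm i0 w ** reflm i0 a \<in> SO1d i0" using refl_pair_SOe SOe_sub by blast
  then have "det (reflm i0 w) * det (reflm i0 a) = 1" by (simp add: SO1d_iff det_mul)
  moreover have "det (reflm i0 a) = -1" by (simp add: a_def det_reflm_axis)
  ultimately show ?thesis by simp
qed



lemma mv_neg: "(M::real^'n::finite^'n) *v (- x) = - (M *v x)"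
  by (simp add: vec_eq_iff matrix_vector_mult_def sum_negf)

lemma presD: "pres i0 g \<Longrightarrow> beta i0 (g *v x) (g *v y) = beta i0 x y"
  by (simp add: pres_def)

lemma frame:
  fixes tau sigma :: "real^'n::finite"
  assumes i01: "i1 \<noteq> i0" and tt: "beta i0 tau tau = 1" and ss: "beta i0 sigma sigma = -1"
    and ts: "beta i0 tau sigma = 0" and t0: "tau $ i0 > 0"
  shows "\<exists>g. g \<in> SO1d i0 \<and> (2 < CARD('n) \<longrightarrow> g \<in> SO1d_e i0)
           \<and> (g *v axis i0 1 = tau \<or> g *v axis i0 1 = - tau) \<and> g *v axis i1 1 = sigma"
proof -
  define e0 :: "real^'n" where "e0 = axis i0 1"
  define e1 :: "real^'n" where "e1 = axis i1 1"
  have e00: "beta i0 e0 e0 = 1" by (simp add: e0_def)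
  have e11: "beta i0 e1 e1 = -1" using i01 by (simp add: e1_def)
  have e01: "beta i0 e0 e1 = 0" using i01 by (simp add: e0_def e1_def axis_comp)
  have e0t: "beta i0 e0 tau = tau $ i0" by (simp add: e0_def)
  define a where "a = e0 + tau"
  have aa: "beta i0 a a = 2 + 2 * tau$i0"
    by (simp add: a_def e00 tt e0t beta_sym[of i0 tau e0])
  have aa0: "beta i0 a a > 0" using aa t0 by simp
  define M where "M = reflm i0 tau ** reflm i0 a"
  have MSO: "M \<in> SO1d_e i0" unfolding M_def using tt aa0 by (intro refl_pair_SOe) simp
  have MSO': "M \<in> SO1d i0" using MSO SOe_sub by blast
  have Mpres: "pres i0 M" using MSO' by (simp add: SO1d_iff)
  have "reflv i0 a e0 = - tau"
  proof -
    have "beta i0 e0 a = 1 + tau$i0" by (simp add: a_def e00 e0t)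
    then have "2 * beta i0 e0 a / beta i0 a a = 1" using aa t0 by (simp add: field_simps)
    then have "reflv i0 a e0 = e0 - a" by (simp add: reflv_def)
    then show ?thesis by (simp add: a_def)
  qed
  moreover have "reflv i0 tau (- tau) = tau"
    using tt by (simp add: reflv_def scaleR_2)
  ultimately have Me0: "M *v e0 = tau"
    by (simp add: M_def matrix_vector_mul_assoc[symmetric] reflm_mult)
  define s1 where "s1 = M *v e1"
  have s11: "beta i0 s1 s1 = -1" using Mpres e11 by (simp add: s1_def presD)
  have s1t: "beta i0 s1 tau = 0" using presD[OF Mpres, of e1 e0] e01 Me0
    by (simp add: s1_def beta_sym[of i0 e1 e0])
  define c where "c = beta i0 s1 sigma"
  show ?thesis
  proof (cases "c \<le> 0")
    case True
    define r where "r = s1 + sigma"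
    have rr: "beta i0 r r = -2 + 2 * c"
      using s11 ss by (simp add: r_def c_def beta_sym[of i0 sigma s1])
    have rr0: "beta i0 r r < 0" using rr True by simp
    define g where "g = (reflm i0 sigma ** reflm i0 r) ** M"
    have gSO: "g \<in> SO1d_e i0" unfolding g_def
      by (intro SO1d_e_mult MSO refl_pair_SOe) (use ss rr0 in \<open>simp add: mult_neg_neg\<close>)
    have "g *v e0 = tau"
    proof -
      have "beta i0 tau r = 0" using s1t ts by (simp add: r_def beta_sym[of i0 tau s1])
      then show ?thesis using ts
        by (simp add: g_def matrix_vector_mul_assoc[symmetric] reflm_mult Me0 reflv_orth beta_sym[of i0 r tau])
    qed
    moreover have "g *v e1 = sigma"
    proof -
      have "beta i0 s1 r = -1 + c" using s11 by (simp add: r_def c_def)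
      then have "2 * beta i0 s1 r / beta i0 r r = 1" using rr rr0 by (simp add: field_simps)
      then have "reflv i0 r s1 = s1 - r" by (simp add: reflv_def)
      then have "reflv i0 r s1 = - sigma" by (simp add: r_def)
      moreover have "reflv i0 sigma (- sigma) = sigma"
        using ss by (simp add: reflv_def scaleR_2)
      ultimately show ?thesis
        by (simp add: g_def matrix_vector_mul_assoc[symmetric] reflm_mult s1_def[symmetric])
    qed
    ultimately show ?thesis using gSO SOe_sub e0_def e1_def by blast
  next
    case False
    define r where "r = s1 - sigma"
    have rr: "beta i0 r r = -2 - 2 * c"
      using s11 ss by (simp add: r_def c_def beta_sym[of i0 sigma s1])
    have rr0: "beta i0 r r < 0" using rr False by simp
    have rs1: "reflv i0 r s1 = sigma"
    proof -
      have "beta i0 s1 r = -1 - c" using s11 by (simp add: r_def c_def)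
      then have "2 * beta i0 s1 r / beta i0 r r = 1" using rr rr0 by (simp add: field_simps)
      then have "reflv i0 r s1 = s1 - r" by (simp add: reflv_def)
      then show ?thesis by (simp add: r_def)
    qed
    have rt: "reflv i0 r tau = tau"
    proof -
      have "beta i0 tau r = 0" using s1t ts by (simp add: r_def beta_sym[of i0 tau s1])
      then show ?thesis by (simp add: reflv_orth)
    qed
    show ?thesis
    proof (cases "2 < CARD('n)")
      case True
      obtain k where k: "k \<noteq> i0" "k \<noteq> i1"
      proof (rule ccontr)
        assume "\<not> thesis"
        then have "UNIV \<subseteq> {i0, i1}" using that by blast
        then have "CARD('n) \<le> card {i0, i1}" by (rule card_mono[rotated]) simp
        also have "\<dots> \<le> 2" by (simp add: card_insert_if)
        finally show False using True by simp
      qed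
      define ek :: "real^'n" where "ek = axis k 1"
      have ekk: "beta i0 ek ek = -1" using k by (simp add: ek_def)
      have ek0: "beta i0 e0 ek = 0" using k by (simp add: e0_def ek_def axis_comp)
      have ek1: "beta i0 e1 ek = 0" using k by (simp add: e1_def ek_def axis_comp)
      define q where "q = M *v ek"
      have qq: "beta i0 q q = -1" using presD[OF Mpres] ekk by (simp add: q_def)
      have tq: "beta i0 tau q = 0" using presD[OF Mpres, of e0 ek] ek0 Me0 by (simp add: q_def)
      have s1q: "beta i0 s1 q = 0" using presD[OF Mpres, of e1 ek] ek1 by (simp add: q_def s1_def)
      define g where "g = (reflm i0 r ** reflm i0 q) ** M"
      have gSO: "g \<in> SO1d_e i0" unfolding g_def
        by (intro SO1d_e_mult MSO refl_pair_SOe) (use qq rr0 in \<open>simp add: mult_neg_neg\<close>)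
      have "g *v e0 = tau"
        by (simp add: g_def matrix_vector_mul_assoc[symmetric] reflm_mult Me0 reflv_orth tq rt)
      moreover have "g *v e1 = sigma"
        by (simp add: g_def matrix_vector_mul_assoc[symmetric] reflm_mult s1_def[symmetric] reflv_orth s1q rs1)
      ultimately show ?thesis using gSO SOe_sub e0_def e1_def by blast
    next
      case False
      define g where "g = reflm i0 r ** M ** reflm i0 e0"
      have "det g = 1"
      proof -
        have "det (reflm i0 r) = -1" using det_reflm[OF _ i01] rr0 by simp
        moreover have "det M = 1" using MSO' by (simp add: SO1d_iff)
        moreover have "det (reflm i0 e0) = -1" by (simp add: e0_def det_reflm_axis)
        ultimately show ?thesis by (simp add: g_def det_mul)
      qed
      moreover have "pres i0 g" unfolding g_def
        using rr0 e00 by (intro pres_mult Mpres pres_reflm) auto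
      ultimately have gSO: "g \<in> SO1d i0" by (simp add: SO1d_iff)
      have "reflv i0 e0 e0 = - e0" using e00 by (simp add: reflv_self)
      then have "M *v (reflm i0 e0 *v e0) = - tau" by (simp add: reflm_mult mv_neg Me0)
      moreover have "reflv i0 r (- tau) = - tau"
        using s1t ts by (intro reflv_orth) (simp add: r_def beta_sym[of i0 tau s1])
      ultimately have "g *v e0 = - tau"
        by (simp add: g_def matrix_vector_mul_assoc[symmetric] reflm_mult)
      moreover have "reflv i0 e0 e1 = e1" using e01 by (simp add: reflv_orth beta_sym[of i0 e1 e0])
      then have "g *v e1 = sigma"
        by (simp add: g_def matrix_vector_mul_assoc[symmetric] reflm_mult s1_def[symmetric] rs1)
      ultimately show ?thesis using gSO False e0_def e1_def by blast
    qed
  qed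
qed



lemma timelike_i0: "beta i0 v v > 0 \<Longrightarrow> v $ i0 \<noteq> 0"
proof
  assume a: "beta i0 v v > 0" and z: "v $ i0 = 0"
  have s: "(\<Sum>i\<in>UNIV - {i0}. v$i * v$i) \<ge> 0" by (intro sum_nonneg) simp
  have "beta i0 v v = v$i0 * v$i0 - (\<Sum>i\<in>UNIV - {i0}. v$i * v$i)" by (simp only: beta_def)
  then show False using a z s by simp
qed

lemma to_orbit:
  fixes x y :: "real^'n::finite"
  assumes i01: "i1 \<noteq> i0" and x: "beta i0 x x = -1" and y: "beta i0 y y = -1"
    and sp: "beta i0 (x - y) (x - y) < 0"
  shows "\<exists>g p q. g \<in> SO1d i0 \<and> (2 < CARD('n) \<longrightarrow> g \<in> SO1d_e i0) \<and>
           p \<in> Wplus i0 i1 \<and> q \<in> Wplus i0 i1 \<and> x = g *v p \<and> y = g *v (- q)"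
proof -
  define k where "k = beta i0 x y"
  have yx: "beta i0 y x = k" by (simp add: k_def beta_sym)
  have "beta i0 (x - y) (x - y) = -2 - 2 * k" using x y yx by (simp add: k_def)
  then have k1: "1 + k > 0" using sp by simp
  define m where "m = x - y"
  define N where "N = sqrt (2 + 2 * k)"
  have N0: "N > 0" using k1 by (simp add: N_def)
  have NN: "N * N = 2 + 2 * k" using k1 by (simp add: N_def)
  have mm: "beta i0 m m = - (N * N)" using x y yx NN by (simp add: m_def k_def)
  define sigma where "sigma = (1 / N) *\<^sub>R m"
  have ss: "beta i0 sigma sigma = -1" using mm N0 by (simp add: sigma_def)
  define e0 :: "real^'n" where "e0 = axis i0 1"
  define m0 where "m0 = m $ i0"
  have e0m: "beta i0 e0 m = m0" by (simp add: e0_def m0_def)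
  have e0e0: "beta i0 e0 e0 = 1" by (simp add: e0_def)
  define u where "u = e0 + (m0 / (N * N)) *\<^sub>R m"
  have um: "beta i0 u m = 0" using mm N0 e0m by (simp add: u_def)
  define U where "U = beta i0 u u"
  have UU: "U = 1 + m0 * m0 / (N * N)"
    using mm N0 e0m e0e0 by (simp add: U_def u_def beta_sym[of i0 m e0] field_simps)
  have U1: "U \<ge> 1" using UU N0 by simp
  define w where "w = (1/2) *\<^sub>R (x + y)"
  have wm: "beta i0 w m = 0" using x y yx by (simp add: w_def m_def k_def)
  have mw: "beta i0 m w = 0" using wm by (simp add: beta_sym)
  define B where "B = beta i0 w w"
  have BB: "B = (k - 1) / 2" using x y yx by (simp add: B_def w_def k_def field_simps)
  define \<alpha> where "\<alpha> = beta i0 w u"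
  define t' where "t' = u + \<alpha> *\<^sub>R w"
  define T where "T = beta i0 t' t'"
  have TT: "T = U + \<alpha> * \<alpha> * (2 + B)"
    by (simp add: T_def t'_def U_def B_def \<alpha>_def beta_sym[of i0 u w] algebra_simps)
  have B2: "2 + B > 0" using BB k1 by simp
  have "\<alpha> * \<alpha> * (2 + B) \<ge> 0" using B2 by simp
  then have T0: "T > 0" using TT U1 by linarith
  have t'm: "beta i0 t' m = 0" using um wm by (simp add: t'_def)
  define A where "A = beta i0 w t'"
  have AA: "A = \<alpha> * (1 + B)" by (simp add: A_def t'_def \<alpha>_def B_def algebra_simps)
  have t'x: "beta i0 t' x = A"
  proof -
    have "x = w + (1/2) *\<^sub>R m" by (simp add: w_def m_def vec_eq_iff field_simps)
    then show ?thesis using t'm by (simp add: A_def beta_sym[of i0 w t'])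
  qed
  have t'y: "beta i0 t' y = A"
  proof -
    have "y = w - (1/2) *\<^sub>R m" by (simp add: w_def m_def vec_eq_iff field_simps)
    then show ?thesis using t'm by (simp add: A_def beta_sym[of i0 w t'])
  qed
  define \<epsilon> :: real where "\<epsilon> = (if t' $ i0 > 0 then 1 else -1)"
  have t'0: "t' $ i0 \<noteq> 0" using timelike_i0[of i0 t'] T0 T_def by simp
  define tau where "tau = (\<epsilon> / sqrt T) *\<^sub>R t'"
  have tt: "beta i0 tau tau = 1" using T0 by (simp add: tau_def T_def[symmetric] \<epsilon>_def)
  have tpos: "tau $ i0 > 0" using T0 t'0 by (auto simp: tau_def \<epsilon>_def)
  have ts: "beta i0 tau sigma = 0" using t'm by (simp add: tau_def sigma_def)
  obtain g where gSO: "g \<in> SO1d i0" and gE: "2 < CARD('n) \<longrightarrow> g \<in> SO1d_e i0"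
    and g0: "g *v axis i0 1 = tau \<or> g *v axis i0 1 = - tau" and g1: "g *v axis i1 1 = sigma"
    using frame[OF i01 tt ss ts tpos] by blast
  obtain s :: real where s: "\<bar>s\<bar> = 1" "g *v axis i0 1 = s *\<^sub>R tau"
    using g0 by (metis abs_1 abs_minus scaleR_minus1_left scaleR_one)
  have gp: "pres i0 g" and gd: "det g = 1" using gSO by (auto simp: SO1d_iff)
  then have "invertible g" by (simp add: invertible_det_nz)
  then obtain h where gh: "g ** h = mat 1" unfolding invertible_def by blast
  define p where "p = h *v x"
  define q where "q = - (h *v y)"
  have gpx: "g *v p = x" by (simp add: p_def matrix_vector_mul_assoc gh)
  have gqy: "g *v (- q) = y" by (simp add: q_def matrix_vector_mul_assoc gh)
  have key: "\<bar>A\<bar> / sqrt T < (1 + k) / N"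
  proof -
    have "(\<bar>A\<bar> * N)^2 < ((1 + k) * sqrt T)^2"
    proof -
      have "(\<bar>A\<bar> * N)^2 = A * A * (N * N)" by (simp add: power_mult_distrib power2_eq_square)
      also have "\<dots> = A * A * (2 + 2 * k)" by (simp add: NN)
      also have "\<dots> = 4 * (1 + B) * (\<alpha> * \<alpha> * (1 + B) * (1 + B))" proof -
        have "2 + 2 * k = 4 * (1 + B)" using BB by simp
        then show ?thesis by (simp add: AA)
      qed
      also have "\<dots> < 4 * (1 + B) * ((1 + B) * T)"
      proof -
        have "\<alpha> * \<alpha> * (1 + B) * (1 + B) < (1 + B) * T"
        proof -
          have "T = U + \<alpha> * \<alpha> * (1 + B) + \<alpha> * \<alpha>" by (simp add: TT algebra_simps)
          moreover have "\<alpha> * \<alpha> \<ge> 0" by simp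
          ultimately have "\<alpha> * \<alpha> * (1 + B) < T" using U1 by linarith
          moreover have "1 + B > 0" using BB k1 by simp
          ultimately show ?thesis by (metis mult.commute mult_less_cancel_left_pos)
        qed
        moreover have "4 * (1 + B) > 0" using BB k1 by simp
        ultimately show ?thesis by simp
      qed
      also have "\<dots> = ((1 + k) * sqrt T)^2"
      proof -
        have H1: "((1 + k) * sqrt T)^2 = (1 + k) * (1 + k) * T" using T0 by (simp add: power_mult_distrib power2_eq_square)
        have H2: "1 + k = 2 * (1 + B)" using BB by simp
        have "4 * (1 + B) * ((1 + B) * T) = (2 * (1 + B)) * (2 * (1 + B)) * T" by (simp add: algebra_simps)
        also have "\<dots> = (1 + k) * (1 + k) * T" by (simp only: H2)
        finally show ?thesis by (simp only: H1)
      qed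
      finally show ?thesis .
    qed
    moreover have "0 \<le> (1 + k) * sqrt T" using k1 T0 by simp
    ultimately have "\<bar>A\<bar> * N < (1 + k) * sqrt T"
      by (rule power2_less_imp_less)
    then have "\<bar>A\<bar> * N / (sqrt T * N) < (1 + k) * sqrt T / (sqrt T * N)"
      using N0 T0 by (intro divide_strict_right_mono) auto
    moreover have "\<bar>A\<bar> * N / (sqrt T * N) = \<bar>A\<bar> / sqrt T" using N0 by simp
    moreover have "(1 + k) * sqrt T / (sqrt T * N) = (1 + k) / N" using T0 by simp
    ultimately show ?thesis by simp
  qed
  have tx: "\<bar>beta i0 tau x\<bar> = \<bar>A\<bar> / sqrt T" using T0 by (simp add: tau_def t'x \<epsilon>_def abs_mult)
  have ty: "\<bar>beta i0 tau y\<bar> = \<bar>A\<bar> / sqrt T" using T0 by (simp add: tau_def t'y \<epsilon>_def abs_mult)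
  have sx: "- beta i0 sigma x = (1 + k) / N"
  proof -
    have "beta i0 sigma x = (1/N) * (beta i0 x x - beta i0 y x)" by (simp add: sigma_def m_def)
    also have "\<dots> = - ((1 + k) / N)" unfolding x yx by (simp add: divide_simps)
    finally show ?thesis by simp
  qed
  have sy: "beta i0 sigma y = (1 + k) / N"
  proof -
    have "beta i0 sigma y = (1/N) * (beta i0 x y - beta i0 y y)" by (simp add: sigma_def m_def)
    also have "\<dots> = (1 + k) / N" unfolding y k_def[symmetric] by (simp add: divide_simps)
    finally show ?thesis .
  qed
  have p0: "p $ i0 = s * beta i0 tau x"
    using presD[OF gp, of "axis i0 1" p] s gpx by simp
  have p1: "p $ i1 = - beta i0 sigma x"
    using presD[OF gp, of "axis i1 1" p] g1 gpx i01 by simp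
  have q0: "q $ i0 = - s * beta i0 tau y"
    using presD[OF gp, of "axis i0 1" "- q"] s gqy by simp
  have q1: "q $ i1 = beta i0 sigma y"
    using presD[OF gp, of "axis i1 1" "- q"] g1 gqy i01 by simp
  have "p \<in> Wplus i0 i1"
  proof -
    have "beta i0 p p = -1" using presD[OF gp, of p p] gpx x by simp
    moreover have "p $ i1 > \<bar>p $ i0\<bar>" using p0 p1 s key tx sx by (simp add: abs_mult)
    ultimately show ?thesis by (simp add: Wplus_def deSitter_def)
  qed
  moreover have "q \<in> Wplus i0 i1"
  proof -
    have "beta i0 (- q) (- q) = -1" using presD[OF gp, of "- q" "- q"] gqy y by simp
    then have "beta i0 q q = -1" by simp
    moreover have "q $ i1 > \<bar>q $ i0\<bar>" using q0 q1 s key ty sy by (simp add: abs_mult)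
    ultimately show ?thesis by (simp add: Wplus_def deSitter_def)
  qed
  ultimately show ?thesis using gSO gE gpx gqy by blast
qed



lemma beta_le: "i1 \<noteq> i0 \<Longrightarrow> beta i0 v v \<le> v$i0 * v$i0 - v$i1 * v$i1"
proof -
  assume i: "i1 \<noteq> i0"
  have "(\<Sum>i\<in>UNIV - {i0}. v$i * v$i) = v$i1 * v$i1 + (\<Sum>i\<in>UNIV - {i0} - {i1}. v$i * v$i)"
    using i by (subst sum.remove[of _ i1]) auto
  moreover have "(\<Sum>i\<in>UNIV - {i0} - {i1}. v$i * v$i) \<ge> 0" by (intro sum_nonneg) simp
  moreover have "beta i0 v v = v$i0 * v$i0 - (\<Sum>i\<in>UNIV - {i0}. v$i * v$i)" by (simp only: beta_def)
  ultimately show ?thesis by linarith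
qed

lemma wedge_sum:
  assumes i: "i1 \<noteq> i0" and p: "p \<in> Wplus i0 i1" and q: "q \<in> Wplus i0 i1"
  shows "beta i0 (p + q) (p + q) < 0"
proof -
  have a: "p$i1 > \<bar>p$i0\<bar>" "q$i1 > \<bar>q$i0\<bar>" using p q by (auto simp: Wplus_def)
  have "\<bar>(p+q)$i0\<bar> < (p+q)$i1" using a by simp
  then have "(p+q)$i0 * (p+q)$i0 < (p+q)$i1 * (p+q)$i1"
    by (metis abs_ge_zero abs_mult_self_eq mult_strict_mono' abs_le_iff less_imp_le order_le_less_trans)
  then show ?thesis using beta_le[OF i, of "p+q"] by linarith
qed

lemma orbit_sub:
  assumes i: "i1 \<noteq> i0" and G: "G \<subseteq> SO1d i0"
  shows "orbit_pairs G (Wplus i0 i1) \<subseteq> spacelike_pairs i0"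
proof
  fix z assume "z \<in> orbit_pairs G (Wplus i0 i1)"
  then obtain g p q where z: "z = (g *v p, g *v (- q))" and g: "g \<in> G"
    and p: "p \<in> Wplus i0 i1" and q: "q \<in> Wplus i0 i1"
    unfolding orbit_pairs_def by auto
  have gp: "pres i0 g" using g G by (auto simp: SO1d_iff)
  have "g *v p - g *v (- q) = g *v (p + q)" by (simp add: mv_neg matrix_vector_right_distrib)
  then have "beta i0 (g *v p - g *v (- q)) (g *v p - g *v (- q)) < 0"
    using wedge_sum[OF i p q] presD[OF gp] by simp
  moreover have "beta i0 (g *v p) (g *v p) = -1" using presD[OF gp] p by (simp add: Wplus_def deSitter_def)
  moreover have "beta i0 (g *v (- q)) (g *v (- q)) = -1" using presD[OF gp] q by (simp add: Wplus_def deSitter_def)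
  ultimately show "z \<in> spacelike_pairs i0" by (simp add: z spacelike_pairs_def deSitter_def)
qed

lemma sub_orbit:
  assumes i: "i1 \<noteq> i0"
  shows "spacelike_pairs i0 \<subseteq> orbit_pairs (SO1d i0) (Wplus i0 i1)"
    and "2 < CARD('n) \<Longrightarrow> spacelike_pairs i0 \<subseteq> orbit_pairs (SO1d_e i0) (Wplus i0 i1::(real^'n::finite) set)"
proof -
  { fix x y :: "real^'n" assume "(x, y) \<in> spacelike_pairs i0"
    then have "beta i0 x x = -1" "beta i0 y y = -1" "beta i0 (x - y) (x - y) < 0"
      by (auto simp: spacelike_pairs_def deSitter_def)
    from to_orbit[OF i this] obtain g p q where "g \<in> SO1d i0" "2 < CARD('n) \<longrightarrow> g \<in> SO1d_e i0"
      "p \<in> Wplus i0 i1" "q \<in> Wplus i0 i1" "x = g *v p" "y = g *v (- q)" by blast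
    then have "(x, y) \<in> orbit_pairs (SO1d i0) (Wplus i0 i1)"
      and "2 < CARD('n) \<Longrightarrow> (x, y) \<in> orbit_pairs (SO1d_e i0) (Wplus i0 i1)"
      unfolding orbit_pairs_def by blast+ }
  then show "spacelike_pairs i0 \<subseteq> orbit_pairs (SO1d i0) (Wplus i0 i1)"
    and "2 < CARD('n) \<Longrightarrow> spacelike_pairs i0 \<subseteq> orbit_pairs (SO1d_e i0) (Wplus i0 i1::(real^'n::finite) set)"
    by (auto simp: spacelike_pairs_def)
qed

lemma orbit_wedges:
  "orbit_pairs (SO1d i0) (Wplus i0 i1) = (\<Union>W\<in>wedges i0 i1. W \<times> uminus ` W)"
proof
  show "orbit_pairs (SO1d i0) (Wplus i0 i1) \<subseteq> (\<Union>W\<in>wedges i0 i1. W \<times> uminus ` W)"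
  proof
    fix z assume "z \<in> orbit_pairs (SO1d i0) (Wplus i0 i1)"
    then obtain g p q where z: "z = (g *v p, g *v (- q))" and g: "g \<in> SO1d i0"
      and p: "p \<in> Wplus i0 i1" and q: "q \<in> Wplus i0 i1"
      unfolding orbit_pairs_def by auto
    have "g *v (- q) = - (g *v q)" by (simp add: mv_neg)
    then have "z \<in> ((\<lambda>x. g *v x) ` Wplus i0 i1) \<times> uminus ` ((\<lambda>x. g *v x) ` Wplus i0 i1)"
      using p q z by auto
    then show "z \<in> (\<Union>W\<in>wedges i0 i1. W \<times> uminus ` W)" using g unfolding wedges_def by blast
  qed
  show "(\<Union>W\<in>wedges i0 i1. W \<times> uminus ` W) \<subseteq> orbit_pairs (SO1d i0) (Wplus i0 i1)"
  proof
    fix z assume "z \<in> (\<Union>W\<in>wedges i0 i1. W \<times> uminus ` W)"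
    then obtain g p q where g: "g \<in> SO1d i0" and p: "p \<in> Wplus i0 i1" and q: "q \<in> Wplus i0 i1"
      and z: "z = (g *v p, - (g *v q))"
      unfolding wedges_def by auto
    have "- (g *v q) = g *v (- q)" by (simp add: mv_neg)
    then show "z \<in> orbit_pairs (SO1d i0) (Wplus i0 i1)"
      unfolding orbit_pairs_def using g p q z by blast
  qed
qed

theorem mainTheorem11:
  fixes i0 i1 :: "'n::finite"
  assumes "i0 \<noteq> i1"
  shows "spacelike_pairs i0 = orbit_pairs (SO1d i0) (Wplus i0 i1)
       \<and> spacelike_pairs i0 = (\<Union>W\<in>wedges i0 i1. W \<times> uminus ` W)
       \<and> (CARD('n) - 1 > 1 \<longrightarrow> spacelike_pairs i0 = orbit_pairs (SO1d_e i0) (Wplus i0 i1))"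
proof -
  have i: "i1 \<noteq> i0" using assms by simp
  have 1: "spacelike_pairs i0 = orbit_pairs (SO1d i0) (Wplus i0 i1)"
    using sub_orbit(1)[OF i] orbit_sub[OF i order_refl] by blast
  moreover have "spacelike_pairs i0 = (\<Union>W\<in>wedges i0 i1. W \<times> uminus ` W)"
    using 1 orbit_wedges by simp
  moreover have "CARD('n) - 1 > 1 \<longrightarrow> spacelike_pairs i0 = orbit_pairs (SO1d_e i0) (Wplus i0 i1)"
  proof
    assume "CARD('n) - 1 > 1"
    then have "2 < CARD('n)" by simp
    then show "spacelike_pairs i0 = orbit_pairs (SO1d_e i0) (Wplus i0 i1)"
      using sub_orbit(2)[OF i] orbit_sub[OF i SOe_sub] by blast
  qed
  ultimately show ?thesis by blast
qed


end
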